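(* Let $A=\bigsqcup_{n\in\omega}A_n$ where each $A_n$ is a set equipped with a total order $<_n$ order-isomorphic to $(\mathbb{Z},<)$, and for $a\in A_n$ let $s(a)$ be the immediate successor of $a$ in $(A_n,<_n)$. Let $J=A\times\{0,1\}$ and consider the free monoid on the alphabet $J^{\pm1}=\{(a,i),(a,i)^{-1}: a\in A, i\in\{0,1\}\}$ with empty word $e$. Let $\mathcal{R}$ be the rewriting system with, for every $a\in A$, the rules (i) $(a,0)(a,0)^{-1}\mapsto e$; (ii) $(a,0)^{-1}(a,0)\mapsto e$; (iii) $(a,1)(a,1)^{-1}\mapsto e$; (iv) $(a,1)^{-1}(a,1)\mapsto e$; (v) $(s(a),0)(a,1)\mapsto (s(a),1)^{-1}(s(a),0)$; (vi) $(s(a),0)(a,1)^{-1}\mapsto (s(a),1)(s(a),0)$; (vii) $(s(a),0)^{-1}(s(a),1)\mapsto (a,1)^{-1}(s(a),0)^{-1}$; (viii) $(s(a),0)^{-1}(s(a),1)^{-1}\mapsto (a,1)(s(a),0)^{-1}$. Then $\mathcal{R}$ is terminating and locally confluent (hence confluent), so every equivalence class of $\leftrightarrow_{\mathcal{R}}^*$ contains a unique terminus. Moreover every terminus is a freely reduced word, and the set $R$ of termini is a set of normal forms for the group $\mathcal{G}=F(J)/\langle\langle\{(s(a),0)(a,1)(s(a),0)^{-1}(s(a),1)\}_{a\in A}\rangle\rangle$: each element of $\mathcal{G}$ is represented by exactly one word in $R$.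
   Context: Work in $\mathsf{ZFC}$. For a rewriting system $\mathcal{R}$ (a set of pairs of words) on a free monoid, $w_0\to_{\mathcal{R}}w_1$ means $w_0\equiv v_0v_1v_2$, $w_1\equiv v_0v_1'v_2$ with $(v_1,v_1')\in\mathcal{R}$; $\to^*_{\mathcal{R}}$ is its transitive closure and $\leftrightarrow^*_{\mathcal{R}}$ the generated equivalence relation. $\mathcal{R}$ is terminating if there is no infinite chain $w_0\to_{\mathcal{R}}w_1\to_{\mathcal{R}}\cdots$; locally confluent if whenever $w_0\to_{\mathcal{R}}w_1$ and $w_0\to_{\mathcal{R}}w_2$ there is $w_3$ with $w_1\to^*_{\mathcal{R}}w_3$ and $w_2\to^*_{\mathcal{R}}w_3$; confluent is the same with $\to^*_{\mathcal{R}}$ in the hypotheses. A terminus is a word $w$ such that no rule applies to it. $F(J)$ is the free group on $J$, and $\langle\langle X\rangle\rangle$ the normal closure. *)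

theory Defs
  imports Main
begin

datatype 'j letter = Pos 'j | Neg 'j

definition alphabet :: "'j set \<Rightarrow> 'j letter set" where
  "alphabet J = Pos ` J \<union> Neg ` J"

definition words :: "'j set \<Rightarrow> 'j letter list set" where
  "words J = {w. set w \<subseteq> alphabet J}"

definition freely_reduced :: "'j letter list \<Rightarrow> bool" where
  "freely_reduced w \<longleftrightarrow>
     \<not> (\<exists>u v j. w = u @ [Pos j, Neg j] @ v \<or> w = u @ [Neg j, Pos j] @ v)"

definition rstep :: "('c list \<times> 'c list) set \<Rightarrow> 'c list \<Rightarrow> 'c list \<Rightarrow> bool" where
  "rstep R w0 w1 \<longleftrightarrow> (\<exists>v0 v1 v1' v2. (v1, v1') \<in> R \<and> w0 = v0 @ v1 @ v2 \<and> w1 = v0 @ v1' @ v2)"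

definition sym_cl :: "('c \<Rightarrow> 'c \<Rightarrow> bool) \<Rightarrow> 'c \<Rightarrow> 'c \<Rightarrow> bool" where
  "sym_cl r x y \<longleftrightarrow> r x y \<or> r y x"

definition requiv :: "('c list \<times> 'c list) set \<Rightarrow> 'c list \<Rightarrow> 'c list \<Rightarrow> bool" where
  "requiv R = (sym_cl (rstep R))\<^sup>*\<^sup>*"

definition terminating_on :: "'c list set \<Rightarrow> ('c list \<times> 'c list) set \<Rightarrow> bool" where
  "terminating_on W R \<longleftrightarrow> \<not> (\<exists>f. f 0 \<in> W \<and> (\<forall>k. rstep R (f k) (f (Suc k))))"

definition locally_confluent_on :: "'c list set \<Rightarrow> ('c list \<times> 'c list) set \<Rightarrow> bool" where
  "locally_confluent_on W R \<longleftrightarrow> (\<forall>w0\<in>W. \<forall>w1 w2. rstep R w0 w1 \<and> rstep R w0 w2 \<longrightarrow>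
      (\<exists>w3. (rstep R)\<^sup>*\<^sup>* w1 w3 \<and> (rstep R)\<^sup>*\<^sup>* w2 w3))"

definition confluent_on :: "'c list set \<Rightarrow> ('c list \<times> 'c list) set \<Rightarrow> bool" where
  "confluent_on W R \<longleftrightarrow> (\<forall>w0\<in>W. \<forall>w1 w2. (rstep R)\<^sup>*\<^sup>* w0 w1 \<and> (rstep R)\<^sup>*\<^sup>* w0 w2 \<longrightarrow>
      (\<exists>w3. (rstep R)\<^sup>*\<^sup>* w1 w3 \<and> (rstep R)\<^sup>*\<^sup>* w2 w3))"

definition terminus :: "('c list \<times> 'c list) set \<Rightarrow> 'c list \<Rightarrow> bool" where
  "terminus R w \<longleftrightarrow> \<not> (\<exists>w'. rstep R w w')"

text \<open>One step: insertion of a relator from X or of a trivial pair x x^{-1}, x^{-1} x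
  (x in J) at any position; its symmetric closure also allows deletion.  Two words
  over J^{+-1} represent the same element of F(J)/<<X>> iff they are related by the
  reflexive-transitive closure of this.\<close>
definition gstep :: "'j set \<Rightarrow> 'j letter list set \<Rightarrow> 'j letter list \<Rightarrow> 'j letter list \<Rightarrow> bool" where
  "gstep J X w0 w1 \<longleftrightarrow> (\<exists>u v r. (r \<in> X \<or> (\<exists>j\<in>J. r = [Pos j, Neg j] \<or> r = [Neg j, Pos j]))
      \<and> w0 = u @ v \<and> w1 = u @ r @ v)"

definition group_equiv :: "'j set \<Rightarrow> 'j letter list set \<Rightarrow> 'j letter list \<Rightarrow> 'j letter list \<Rightarrow> bool" where
  "group_equiv J X = (sym_cl (gstep J X))\<^sup>*\<^sup>*"

text \<open>A = disjoint union of the A n, realised as {(n,x). x \<in> A n}.\<close>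
definition Aset :: "(nat \<Rightarrow> 'a set) \<Rightarrow> (nat \<times> 'a) set" where
  "Aset A = (SIGMA n:UNIV. A n)"

definition succ_in :: "'a set \<Rightarrow> ('a \<Rightarrow> 'a \<Rightarrow> bool) \<Rightarrow> 'a \<Rightarrow> 'a" where
  "succ_in B lt x = (THE y. y \<in> B \<and> lt x y \<and> \<not> (\<exists>z\<in>B. lt x z \<and> lt z y))"

definition s :: "(nat \<Rightarrow> 'a set) \<Rightarrow> (nat \<Rightarrow> 'a \<Rightarrow> 'a \<Rightarrow> bool) \<Rightarrow> nat \<times> 'a \<Rightarrow> nat \<times> 'a" where
  "s A lt a = (fst a, succ_in (A (fst a)) (lt (fst a)) (snd a))"

definition Jset :: "(nat \<Rightarrow> 'a set) \<Rightarrow> ((nat \<times> 'a) \<times> nat) set" where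
  "Jset A = Aset A \<times> {0, 1}"

definition rules :: "(nat \<Rightarrow> 'a set) \<Rightarrow> (nat \<Rightarrow> 'a \<Rightarrow> 'a \<Rightarrow> bool)
    \<Rightarrow> (((nat \<times> 'a) \<times> nat) letter list \<times> ((nat \<times> 'a) \<times> nat) letter list) set" where
  "rules A lt = (\<Union>a\<in>Aset A.
     { ([Pos (a,0), Neg (a,0)], []),
       ([Neg (a,0), Pos (a,0)], []),
       ([Pos (a,1), Neg (a,1)], []),
       ([Neg (a,1), Pos (a,1)], []),
       ([Pos (s A lt a,0), Pos (a,1)], [Neg (s A lt a,1), Pos (s A lt a,0)]),
       ([Pos (s A lt a,0), Neg (a,1)], [Pos (s A lt a,1), Pos (s A lt a,0)]),
       ([Neg (s A lt a,0), Pos (s A lt a,1)], [Neg (a,1), Neg (s A lt a,0)]),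
       ([Neg (s A lt a,0), Neg (s A lt a,1)], [Pos (a,1), Neg (s A lt a,0)]) })"

definition relators :: "(nat \<Rightarrow> 'a set) \<Rightarrow> (nat \<Rightarrow> 'a \<Rightarrow> 'a \<Rightarrow> bool)
    \<Rightarrow> ((nat \<times> 'a) \<times> nat) letter list set" where
  "relators A lt = (\<lambda>a. [Pos (s A lt a,0), Pos (a,1), Neg (s A lt a,0), Pos (s A lt a,1)]) ` Aset A"

end

theory Submission imports Defs "HOL-Library.Confluence" begin

lemma succ_in_f:
  assumes b: "bij_betw f UNIV B" and o: "\<forall>x y. lt (f x) (f y) \<longleftrightarrow> x < (y::int)"
  shows "succ_in B lt (f k) = f (k+1)"
  unfolding succ_in_def
proof (rule the_equality)
  show "f (k+1) \<in> B \<and> lt (f k) (f (k+1)) \<and> \<not> (\<exists>z\<in>B. lt (f k) z \<and> lt z (f (k+1)))"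
  proof (intro conjI)
    show "f (k+1) \<in> B" using b bij_betwE by blast
    show "lt (f k) (f (k+1))" using o by simp
    show "\<not> (\<exists>z\<in>B. lt (f k) z \<and> lt z (f (k+1)))"
    proof
      assume "\<exists>z\<in>B. lt (f k) z \<and> lt z (f (k+1))"
      then obtain z where z: "z \<in> B" "lt (f k) z" "lt z (f (k+1))" by blast
      then obtain l where "z = f l" using b by (metis bij_betw_inv_into_right[OF b z(1)])
      thus False using z o by auto
    qed
  qed
  fix y assume y: "y \<in> B \<and> lt (f k) y \<and> \<not> (\<exists>z\<in>B. lt (f k) z \<and> lt z y)"
  then obtain m where m: "y = f m" using y by (metis bij_betw_inv_into_right[OF b])
  have "k < m" using y m o by auto
  moreover have "\<not> m > k + 1"
  proof
    assume "m > k+1"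
    hence "lt (f k) (f (k+1)) \<and> lt (f (k+1)) y" using o m by auto
    moreover have "f (k+1) \<in> B" using b bij_betwE by blast
    ultimately show False using y by blast
  qed
  ultimately have "m = k+1" by linarith
  thus "y = f (k+1)" using m by simp
qed

lemma rstep_ctx: "rstep R x y \<Longrightarrow> rstep R (p@x@q) (p@y@q)"
proof -
  assume "rstep R x y"
  then obtain v0 v1 v1' v2 where h: "(v1,v1') \<in> R" "x = v0@v1@v2" "y = v0@v1'@v2" unfolding rstep_def by blast
  show ?thesis unfolding rstep_def
    by (rule exI[of _ "p@v0"], rule exI[of _ v1], rule exI[of _ v1'], rule exI[of _ "v2@q"]) (simp add: h)
qed

lemma rtc_ctx: "(rstep R)\<^sup>*\<^sup>* x y \<Longrightarrow> (rstep R)\<^sup>*\<^sup>* (p@x@q) (p@y@q)"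
  by (induction rule: rtranclp_induct) (auto intro: rtranclp.rtrancl_into_rtrancl rstep_ctx)

lemma rstep_rule: "(l,r) \<in> R \<Longrightarrow> rstep R (p@l@q) (p@r@q)"
  unfolding rstep_def by blast

fun lj :: "'j letter \<Rightarrow> 'j" where "lj (Pos j) = j" | "lj (Neg j) = j"
definition isX :: "('b \<times> nat) letter \<Rightarrow> bool" where "isX c \<longleftrightarrow> snd (lj c) = 0"
definition isY :: "('b \<times> nat) letter \<Rightarrow> bool" where "isY c \<longleftrightarrow> snd (lj c) = 1"
definition nX :: "('b \<times> nat) letter list \<Rightarrow> nat" where "nX w = length (filter isX w)"
definition nY :: "('b \<times> nat) letter list \<Rightarrow> nat" where "nY w = length (filter isY w)"
fun invc :: "('b \<times> nat) letter list \<Rightarrow> nat" where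
  "invc [] = 0" | "invc (c#w) = (if isX c then nY w else 0) + invc w"
definition mes :: "('b \<times> nat) letter list \<Rightarrow> nat" where "mes w = length w + invc w"

lemma invc_append: "invc (u@v) = invc u + invc v + nX u * nY v"
  by (induction u) (auto simp: nX_def nY_def algebra_simps)

lemma nY_append: "nY (u@v) = nY u + nY v" by (simp add: nY_def)

lemma rule_props: "(l,r) \<in> rules A lt \<Longrightarrow> nX r \<le> nX l \<and> nY r \<le> nY l \<and> length r + invc r < length l + invc l"
  by (auto simp: rules_def nX_def nY_def isX_def isY_def)

lemma rstep_mes: "rstep (rules A lt) x y \<Longrightarrow> mes y < mes x"
proof -
  assume "rstep (rules A lt) x y"
  then obtain p l r q where h: "(l,r) \<in> rules A lt" "x = p@l@q" "y = p@r@q" unfolding rstep_def by blast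
  have pr: "nX r \<le> nX l" "nY r \<le> nY l" "length r + invc r < length l + invc l" using rule_props[OF h(1)] by auto
  have e: "\<And>z. invc (p@z@q) = invc p + invc z + invc q + nX z * nY q + nX p * (nY z + nY q)"
    by (simp add: invc_append nY_append algebra_simps)
  have c1: "nX r * nY q \<le> nX l * nY q" using pr by (simp add: mult_le_mono1)
  have c2: "nX p * (nY r + nY q) \<le> nX p * (nY l + nY q)" using pr by (simp add: mult_le_mono2)
  show ?thesis unfolding mes_def h(2,3) e length_append using pr c1 c2 by linarith
qed

lemma no_inf_chain: "\<not> (\<exists>f. \<forall>k. rstep (rules A lt) (f k) (f (Suc k)))"
proof
  assume "\<exists>f. \<forall>k. rstep (rules A lt) (f k) (f (Suc k))"
  then obtain f where f: "\<forall>k. rstep (rules A lt) (f k) (f (Suc k))" by blast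
  have "mes (f k) + k \<le> mes (f 0)" for k
  proof (induction k)
    case (Suc k) thus ?case using rstep_mes[OF f[rule_format, of k]] by auto
  qed simp
  from this[of "Suc (mes (f 0))"] show False by simp
qed

lemma newman_gen:
  fixes m :: "'x \<Rightarrow> nat"
  assumes dec: "\<And>x y. r x y \<Longrightarrow> m y < m x"
    and lc: "\<And>x y z. r x y \<Longrightarrow> r x z \<Longrightarrow> \<exists>u. r\<^sup>*\<^sup>* y u \<and> r\<^sup>*\<^sup>* z u"
  shows "r\<^sup>*\<^sup>* x y \<Longrightarrow> r\<^sup>*\<^sup>* x z \<Longrightarrow> \<exists>u. r\<^sup>*\<^sup>* y u \<and> r\<^sup>*\<^sup>* z u"
proof (induction x arbitrary: y z rule: measure_induct_rule[where f=m])
  case (less x)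
  show ?case
  proof (cases "x = y")
    case True thus ?thesis using less.prems by blast
  next
    case False
    then obtain y1 where y1: "r x y1" "r\<^sup>*\<^sup>* y1 y" using less.prems(1) by (metis converse_rtranclpE)
    show ?thesis
    proof (cases "x = z")
      case True thus ?thesis using less.prems by blast
    next
      case False
      then obtain z1 where z1: "r x z1" "r\<^sup>*\<^sup>* z1 z" using less.prems(2) by (metis converse_rtranclpE)
      obtain u0 where u0: "r\<^sup>*\<^sup>* y1 u0" "r\<^sup>*\<^sup>* z1 u0" using lc[OF y1(1) z1(1)] by blast
      obtain u1 where u1: "r\<^sup>*\<^sup>* y u1" "r\<^sup>*\<^sup>* u0 u1" using less.IH[OF dec[OF y1(1)] y1(2) u0(1)] by blast
      have "r\<^sup>*\<^sup>* z1 u1" using u0(2) u1(2) by simp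
      then obtain u2 where u2: "r\<^sup>*\<^sup>* z u2" "r\<^sup>*\<^sup>* u1 u2" using less.IH[OF dec[OF z1(1)] z1(2)] by blast
      show ?thesis using u1 u2 by (meson rtranclp_trans)
    qed
  qed
qed

lemma nf_exists_gen:
  fixes m :: "'x \<Rightarrow> nat"
  assumes dec: "\<And>x y. r x y \<Longrightarrow> m y < m x"
  shows "\<exists>t. r\<^sup>*\<^sup>* x t \<and> \<not> (\<exists>t'. r t t')"
proof (induction x rule: measure_induct_rule[where f=m])
  case (less x)
  show ?case
  proof (cases "\<exists>t'. r x t'")
    case True
    then obtain t' where t': "r x t'" by blast
    obtain t where "r\<^sup>*\<^sup>* t' t" "\<not> (\<exists>t'. r t t')" using less.IH[OF dec[OF t']] by blast
    thus ?thesis using t' by (meson converse_rtranclp_into_rtranclp)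
  qed blast
qed

lemma sym_cl_eq: "sym_cl r = symclp r"
  by (intro ext) (simp add: sym_cl_def symclp_def)

lemma equivclp_ctx: "(\<And>x y. r x y \<Longrightarrow> r (f x) (f y)) \<Longrightarrow> equivclp r x y \<Longrightarrow> equivclp r (f x) (f y)"
proof -
  assume h: "\<And>x y. r x y \<Longrightarrow> r (f x) (f y)" and e: "equivclp r x y"
  from e show ?thesis
  proof (induction rule: equivclp_induct)
    case (step y z) thus ?case using h by (meson equivclp_into_equivclp)
  qed simp
qed

lemma equivclp_sub: "(\<And>x y. r x y \<Longrightarrow> equivclp r' x y) \<Longrightarrow> equivclp r x y \<Longrightarrow> equivclp r' x y"
proof -
  assume h: "\<And>x y. r x y \<Longrightarrow> equivclp r' x y" and e: "equivclp r x y"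
  from e show ?thesis
  proof (induction rule: equivclp_induct)
    case (step y z) thus ?case using h by (meson equivclp_sym equivclp_trans)
  qed simp
qed

lemma gstep_ctx: "gstep J X x y \<Longrightarrow> gstep J X (p@x@q) (p@y@q)"
proof -
  assume "gstep J X x y"
  then obtain u v r where h: "r \<in> X \<or> (\<exists>j\<in>J. r = [Pos j, Neg j] \<or> r = [Neg j, Pos j])" "x = u@v" "y = u@r@v"
    unfolding gstep_def by blast
  show ?thesis unfolding gstep_def
    by (rule exI[of _ "p@u"], rule exI[of _ "v@q"], rule exI[of _ r]) (simp add: h)
qed

lemma G_ctx: "group_equiv J X x y \<Longrightarrow> group_equiv J X (p@x@q) (p@y@q)"
  unfolding group_equiv_def sym_cl_eq equivclp_def[symmetric]
  by (rule equivclp_ctx[where f="\<lambda>x. p@x@q"]) (auto intro: gstep_ctx)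

lemma G_ins: "r \<in> X \<or> (\<exists>j\<in>J. r = [Pos j, Neg j] \<or> r = [Neg j, Pos j]) \<Longrightarrow> group_equiv J X (u@v) (u@r@v)"
  unfolding group_equiv_def sym_cl_eq equivclp_def[symmetric]
  by (rule r_into_equivclp) (auto simp: gstep_def)

lemma G_sym: "group_equiv J X x y \<Longrightarrow> group_equiv J X y x"
  unfolding group_equiv_def sym_cl_eq equivclp_def[symmetric] by (rule equivclp_sym)

lemma G_trans: "group_equiv J X x y \<Longrightarrow> group_equiv J X y z \<Longrightarrow> group_equiv J X x z"
  unfolding group_equiv_def sym_cl_eq equivclp_def[symmetric] by (rule equivclp_trans)

context
  fixes A :: "nat \<Rightarrow> 'a set" and lt :: "nat \<Rightarrow> 'a \<Rightarrow> 'a \<Rightarrow> bool"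
  assumes iso: "\<And>n. \<exists>f :: int \<Rightarrow> 'a. bij_betw f UNIV (A n) \<and>
                    (\<forall>x y. lt n (f x) (f y) \<longleftrightarrow> x < y)"
begin

lemma s_in: "a \<in> Aset A \<Longrightarrow> s A lt a \<in> Aset A"
proof -
  assume a: "a \<in> Aset A"
  obtain n x where ax: "a = (n,x)" "x \<in> A n" using a by (auto simp: Aset_def)
  obtain f :: "int \<Rightarrow> 'a" where f: "bij_betw f UNIV (A n)" "\<forall>x y. lt n (f x) (f y) \<longleftrightarrow> x < y" using iso by blast
  obtain k where "x = f k" using ax by (metis bij_betw_inv_into_right[OF f(1)])
  hence "s A lt a = (n, f (k+1))" using succ_in_f[OF f] ax by (simp add: s_def)
  moreover have "f (k+1) \<in> A n" using f(1) bij_betwE by blast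
  ultimately show ?thesis by (auto simp: Aset_def)
qed

lemma s_inj: "a \<in> Aset A \<Longrightarrow> a' \<in> Aset A \<Longrightarrow> s A lt a = s A lt a' \<Longrightarrow> a = a'"
proof -
  assume a: "a \<in> Aset A" and a': "a' \<in> Aset A" and e: "s A lt a = s A lt a'"
  obtain n x where ax: "a = (n,x)" "x \<in> A n" using a by (auto simp: Aset_def)
  obtain n' x' where ax': "a' = (n',x')" "x' \<in> A n'" using a' by (auto simp: Aset_def)
  have nn: "n = n'" using e ax ax' by (simp add: s_def)
  obtain f :: "int \<Rightarrow> 'a" where f: "bij_betw f UNIV (A n)" "\<forall>x y. lt n (f x) (f y) \<longleftrightarrow> x < y" using iso by blast
  obtain k where k: "x = f k" using ax by (metis bij_betw_inv_into_right[OF f(1)])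
  obtain k' where k': "x' = f k'" using ax' nn by (metis bij_betw_inv_into_right[OF f(1)])
  have "f (k+1) = f (k'+1)" using e succ_in_f[OF f] ax ax' nn k k' by (simp add: s_def)
  hence "k = k'" using f(1) by (simp add: bij_betw_def inj_eq)
  thus ?thesis using ax ax' nn k k' by simp
qed

lemma s_inj_iff: "a \<in> Aset A \<Longrightarrow> a' \<in> Aset A \<Longrightarrow> s A lt a = s A lt a' \<longleftrightarrow> a = a'"
  using s_inj by blast

lemma s3a: "(([a,b],[a',b']) \<in> R) \<Longrightarrow> rstep R [a,b,c] [a',b',c]"
  unfolding rstep_def by (rule exI[of _ "[]"], rule exI[of _ "[a,b]"], rule exI[of _ "[a',b']"], rule exI[of _ "[c]"]) simp
lemma s3b: "(([b,c],[b',c']) \<in> R) \<Longrightarrow> rstep R [a,b,c] [a,b',c']"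
  unfolding rstep_def by (rule exI[of _ "[a]"], rule exI[of _ "[b,c]"], rule exI[of _ "[b',c']"], rule exI[of _ "[]"]) simp
lemma s3c: "(([a,b],[]) \<in> R) \<Longrightarrow> rstep R [a,b,c] [c]"
  unfolding rstep_def by (rule exI[of _ "[]"], rule exI[of _ "[a,b]"], rule exI[of _ "[]"], rule exI[of _ "[c]"]) simp
lemma s3d: "(([b,c],[]) \<in> R) \<Longrightarrow> rstep R [a,b,c] [a]"
  unfolding rstep_def by (rule exI[of _ "[a]"], rule exI[of _ "[b,c]"], rule exI[of _ "[]"], rule exI[of _ "[]"]) simp
lemma join1: "(rstep R)\<^sup>*\<^sup>* u [x] \<Longrightarrow> \<exists>w3. (rstep R)\<^sup>*\<^sup>* u w3 \<and> (rstep R)\<^sup>*\<^sup>* [x] w3"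
  by blast
lemma join2: "(rstep R)\<^sup>*\<^sup>* u [x] \<Longrightarrow> \<exists>w3. (rstep R)\<^sup>*\<^sup>* [x] w3 \<and> (rstep R)\<^sup>*\<^sup>* u w3"
  by blast
lemma two_steps: "r x y \<Longrightarrow> r y z \<Longrightarrow> r\<^sup>*\<^sup>* x z" by auto

lemma overlap:
  assumes sub: "rules A lt \<subseteq> RR" and h: "(l1,r1) \<in> rules A lt" "(l2,r2) \<in> rules A lt" "l1 = [c1,c2]" "l2 = [c2,c3]"
  shows "\<exists>w3. (rstep RR)\<^sup>*\<^sup>* (r1@[c3]) w3 \<and> (rstep RR)\<^sup>*\<^sup>* (c1#r2) w3"
proof -
  have m: "\<And>a. a \<in> Aset A \<Longrightarrow> ([Pos (a,0), Neg (a,0)], []) \<in> RR"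
       "\<And>a. a \<in> Aset A \<Longrightarrow> ([Neg (a,0), Pos (a,0)], []) \<in> RR"
       "\<And>a. a \<in> Aset A \<Longrightarrow> ([Pos (a,1), Neg (a,1)], []) \<in> RR"
       "\<And>a. a \<in> Aset A \<Longrightarrow> ([Neg (a,1), Pos (a,1)], []) \<in> RR"
       "\<And>a. a \<in> Aset A \<Longrightarrow> ([Pos (s A lt a,0), Pos (a,1)], [Neg (s A lt a,1), Pos (s A lt a,0)]) \<in> RR"
       "\<And>a. a \<in> Aset A \<Longrightarrow> ([Pos (s A lt a,0), Neg (a,1)], [Pos (s A lt a,1), Pos (s A lt a,0)]) \<in> RR"
       "\<And>a. a \<in> Aset A \<Longrightarrow> ([Neg (s A lt a,0), Pos (s A lt a,1)], [Neg (a,1), Neg (s A lt a,0)]) \<in> RR"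
       "\<And>a. a \<in> Aset A \<Longrightarrow> ([Neg (s A lt a,0), Neg (s A lt a,1)], [Pos (a,1), Neg (s A lt a,0)]) \<in> RR"
    using sub unfolding rules_def by blast+
  note mm = m[simplified]
  show ?thesis
  using h apply (simp add: rules_def)
  apply (elim bexE disjE)
  apply (simp_all add: s_inj_iff)
  apply (((rule exI, rule rtranclp.rtrancl_refl) | ((rule join1 join2), (rule two_steps), (rule s3a s3b s3c s3d), (rule mm; (assumption | (rule s_in, assumption))), (rule s3a s3b s3c s3d), (rule mm; (assumption | (rule s_in, assumption))))))+
  done
qed

lemma det: "(l,r1) \<in> rules A lt \<Longrightarrow> (l,r2) \<in> rules A lt \<Longrightarrow> r1 = r2"
  by (auto simp: rules_def s_inj_iff)

lemma lhs2: "(l,r) \<in> rules A lt \<Longrightarrow> \<exists>c1 c2. l = [c1,c2]"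
  by (auto simp: rules_def)

lemma core:
  assumes h1: "(l1,r1) \<in> rules A lt" and h2: "(l2,r2) \<in> rules A lt" and e: "l1@q1 = d@l2@q2"
  shows "\<exists>w3. (rstep (rules A lt))\<^sup>*\<^sup>* (p@r1@q1) w3 \<and> (rstep (rules A lt))\<^sup>*\<^sup>* (p@d@r2@q2) w3"
proof -
  obtain c1 c2 where l1: "l1 = [c1,c2]" using lhs2[OF h1] by blast
  obtain e1 e2 where l2: "l2 = [e1,e2]" using lhs2[OF h2] by blast
  show ?thesis
  proof (cases d)
    case Nil
    hence "l1 = l2" "q1 = q2" using e l1 l2 by auto
    hence "r1 = r2" using det h1 h2 by blast
    thus ?thesis using Nil \<open>q1 = q2\<close> by auto
  next
    case (Cons x m)
    show ?thesis
    proof (cases m)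
      case Nil
      have q1: "q1 = e2 # q2" and c: "c1 = x" "c2 = e1" using e l1 l2 Cons Nil by auto
      obtain w where w: "(rstep (rules A lt))\<^sup>*\<^sup>* (r1@[e2]) w" "(rstep (rules A lt))\<^sup>*\<^sup>* (x#r2) w"
        using overlap[OF subset_refl h1 h2, of c1 c2 e2] l1 l2 c by auto
      have "(rstep (rules A lt))\<^sup>*\<^sup>* (p@(r1@[e2])@q2) (p@w@q2)" using rtc_ctx[OF w(1)] .
      moreover have "(rstep (rules A lt))\<^sup>*\<^sup>* (p@(x#r2)@q2) (p@w@q2)" using rtc_ctx[OF w(2)] .
      ultimately show ?thesis using q1 Cons Nil by auto
    next
      case (Cons y m')
      have q1: "q1 = m'@l2@q2" and c: "l1 = [x,y]" using e l1 l2 Cons \<open>d = x # m\<close> by auto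
      have "rstep (rules A lt) ((p@r1@m')@l2@q2) ((p@r1@m')@r2@q2)" by (rule rstep_rule[OF h2])
      moreover have "rstep (rules A lt) (p@l1@(m'@r2@q2)) (p@r1@(m'@r2@q2))" by (rule rstep_rule[OF h1])
      ultimately show ?thesis using q1 c Cons \<open>d = x # m\<close> by auto
    qed
  qed
qed

lemma local_conf:
  assumes "rstep (rules A lt) w0 w1" "rstep (rules A lt) w0 w2"
  shows "\<exists>w3. (rstep (rules A lt))\<^sup>*\<^sup>* w1 w3 \<and> (rstep (rules A lt))\<^sup>*\<^sup>* w2 w3"
proof -
  obtain p1 l1 r1 q1 where a1: "(l1,r1) \<in> rules A lt" "w0 = p1@l1@q1" "w1 = p1@r1@q1"
    using assms(1) unfolding rstep_def by blast
  obtain p2 l2 r2 q2 where a2: "(l2,r2) \<in> rules A lt" "w0 = p2@l2@q2" "w2 = p2@r2@q2"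
    using assms(2) unfolding rstep_def by blast
  have "p1 @ (l1@q1) = p2 @ (l2@q2)" using a1 a2 by simp
  then obtain us where "p1 = p2@us \<and> us@(l1@q1) = l2@q2 \<or> p1@us = p2 \<and> l1@q1 = us@l2@q2"
    unfolding append_eq_append_conv2 by blast
  thus ?thesis
  proof
    assume h: "p1 = p2@us \<and> us@(l1@q1) = l2@q2"
    obtain w3 where "(rstep (rules A lt))\<^sup>*\<^sup>* (p2@r2@q2) w3" "(rstep (rules A lt))\<^sup>*\<^sup>* (p2@us@r1@q1) w3"
      using core[OF a2(1) a1(1), of q2 us q1 p2] h by auto
    thus ?thesis using a1 a2 h by auto
  next
    assume h: "p1@us = p2 \<and> l1@q1 = us@l2@q2"
    obtain w3 where "(rstep (rules A lt))\<^sup>*\<^sup>* (p1@r1@q1) w3" "(rstep (rules A lt))\<^sup>*\<^sup>* (p1@us@r2@q2) w3"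
      using core[OF a1(1) a2(1), of q1 us q2 p1] h by auto
    thus ?thesis using a1 a2 h by auto
  qed
qed

lemma rule_alpha: "(l,r) \<in> rules A lt \<Longrightarrow> set r \<subseteq> alphabet (Jset A)"
  by (auto simp: rules_def alphabet_def Jset_def s_in)

lemma rstep_words: "rstep (rules A lt) x y \<Longrightarrow> x \<in> words (Jset A) \<Longrightarrow> y \<in> words (Jset A)"
  unfolding rstep_def words_def using rule_alpha by fastforce

lemma rtc_words: "(rstep (rules A lt))\<^sup>*\<^sup>* x y \<Longrightarrow> x \<in> words (Jset A) \<Longrightarrow> y \<in> words (Jset A)"
  by (induction rule: rtranclp_induct) (auto intro: rstep_words)

lemma Jin: "a \<in> Aset A \<Longrightarrow> (a,0) \<in> Jset A" "a \<in> Aset A \<Longrightarrow> (a,1) \<in> Jset A"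
  by (auto simp: Jset_def)

lemma ins_pair1: "j \<in> Jset A \<Longrightarrow> group_equiv (Jset A) (relators A lt) (p@q) (p@[Pos j, Neg j]@q)"
  by (rule G_ins) blast
lemma ins_pair2: "j \<in> Jset A \<Longrightarrow> group_equiv (Jset A) (relators A lt) (p@q) (p@[Neg j, Pos j]@q)"
  by (rule G_ins) blast
lemma ins_rel: "a \<in> Aset A \<Longrightarrow> group_equiv (Jset A) (relators A lt) (p@q)
   (p@[Pos (s A lt a,0), Pos (a,1), Neg (s A lt a,0), Pos (s A lt a,1)]@q)"
  by (rule G_ins) (auto simp: relators_def)

lemma L5: assumes a: "a \<in> Aset A"
  shows "group_equiv (Jset A) (relators A lt) [Pos (s A lt a,0), Pos (a,1), Neg (s A lt a,0)] [Neg (s A lt a,1)]"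
proof -
  have b: "s A lt a \<in> Aset A" using s_in a by blast
  have 1: "group_equiv (Jset A) (relators A lt) [Pos (s A lt a,0), Pos (a,1), Neg (s A lt a,0)]
     [Pos (s A lt a,0), Pos (a,1), Neg (s A lt a,0), Pos (s A lt a,1), Neg (s A lt a,1)]"
    using ins_pair1[where j="(s A lt a,1)" and p="[Pos (s A lt a,0), Pos (a,1), Neg (s A lt a,0)]" and q="[]"] Jin b by simp
  have 2: "group_equiv (Jset A) (relators A lt) [Neg (s A lt a,1)]
     [Pos (s A lt a,0), Pos (a,1), Neg (s A lt a,0), Pos (s A lt a,1), Neg (s A lt a,1)]"
    using ins_rel[where p="[]" and q="[Neg (s A lt a,1)]", OF a] by simp
  show ?thesis using G_trans[OF 1 G_sym[OF 2]] .
qed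

lemma L6: assumes a: "a \<in> Aset A"
  shows "group_equiv (Jset A) (relators A lt) [Pos (s A lt a,0), Neg (a,1), Neg (s A lt a,0)] [Pos (s A lt a,1)]"
proof -
  have b: "s A lt a \<in> Aset A" using s_in a by blast
  have 1: "group_equiv (Jset A) (relators A lt) [Pos (s A lt a,0), Neg (a,1), Neg (s A lt a,0)]
     [Pos (s A lt a,0), Neg (a,1), Neg (s A lt a,0), Pos (s A lt a,0), Pos (a,1), Neg (s A lt a,0), Pos (s A lt a,1)]"
    using ins_rel[where p="[Pos (s A lt a,0), Neg (a,1), Neg (s A lt a,0)]" and q="[]", OF a] by simp
  have 2: "group_equiv (Jset A) (relators A lt) [Pos (s A lt a,0), Neg (a,1), Pos (a,1), Neg (s A lt a,0), Pos (s A lt a,1)]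
     [Pos (s A lt a,0), Neg (a,1), Neg (s A lt a,0), Pos (s A lt a,0), Pos (a,1), Neg (s A lt a,0), Pos (s A lt a,1)]"
    using ins_pair2[where j="(s A lt a,0)" and p="[Pos (s A lt a,0), Neg (a,1)]" and q="[Pos (a,1), Neg (s A lt a,0), Pos (s A lt a,1)]"] Jin b by simp
  have 3: "group_equiv (Jset A) (relators A lt) [Pos (s A lt a,0), Neg (s A lt a,0), Pos (s A lt a,1)]
     [Pos (s A lt a,0), Neg (a,1), Pos (a,1), Neg (s A lt a,0), Pos (s A lt a,1)]"
    using ins_pair2[where j="(a,1)" and p="[Pos (s A lt a,0)]" and q="[Neg (s A lt a,0), Pos (s A lt a,1)]"] Jin a by simp
  have 4: "group_equiv (Jset A) (relators A lt) [Pos (s A lt a,1)] [Pos (s A lt a,0), Neg (s A lt a,0), Pos (s A lt a,1)]"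
    using ins_pair1[where j="(s A lt a,0)" and p="[]" and q="[Pos (s A lt a,1)]"] Jin b by simp
  show ?thesis using G_trans[OF G_trans[OF G_trans[OF 1 G_sym[OF 2]] G_sym[OF 3]] G_sym[OF 4]] .
qed

lemma rule_G: assumes "(l,r) \<in> rules A lt" shows "group_equiv (Jset A) (relators A lt) l r"
proof -
  obtain a where a: "a \<in> Aset A" and c:
    "(l,r) \<in> { ([Pos (a,0), Neg (a,0)], []),
       ([Neg (a,0), Pos (a,0)], []),
       ([Pos (a,1), Neg (a,1)], []),
       ([Neg (a,1), Pos (a,1)], []),
       ([Pos (s A lt a,0), Pos (a,1)], [Neg (s A lt a,1), Pos (s A lt a,0)]),
       ([Pos (s A lt a,0), Neg (a,1)], [Pos (s A lt a,1), Pos (s A lt a,0)]),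
       ([Neg (s A lt a,0), Pos (s A lt a,1)], [Neg (a,1), Neg (s A lt a,0)]),
       ([Neg (s A lt a,0), Neg (s A lt a,1)], [Pos (a,1), Neg (s A lt a,0)]) }"
    using assms unfolding rules_def by blast
  have b: "s A lt a \<in> Aset A" using s_in a by blast
  have p1: "\<And>j. j \<in> Jset A \<Longrightarrow> group_equiv (Jset A) (relators A lt) [Pos j, Neg j] []"
    using ins_pair1[where p="[]" and q="[]"] G_sym by fastforce
  have p2: "\<And>j. j \<in> Jset A \<Longrightarrow> group_equiv (Jset A) (relators A lt) [Neg j, Pos j] []"
    using ins_pair2[where p="[]" and q="[]"] G_sym by fastforce
  have r5: "group_equiv (Jset A) (relators A lt) [Pos (s A lt a,0), Pos (a,1)] [Neg (s A lt a,1), Pos (s A lt a,0)]"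
  proof -
    have 1: "group_equiv (Jset A) (relators A lt) [Pos (s A lt a,0), Pos (a,1)] [Pos (s A lt a,0), Pos (a,1), Neg (s A lt a,0), Pos (s A lt a,0)]"
      using ins_pair2[where j="(s A lt a,0)" and p="[Pos (s A lt a,0), Pos (a,1)]" and q="[]"] Jin b by simp
    have 2: "group_equiv (Jset A) (relators A lt) [Pos (s A lt a,0), Pos (a,1), Neg (s A lt a,0), Pos (s A lt a,0)] [Neg (s A lt a,1), Pos (s A lt a,0)]"
      using G_ctx[OF L5[OF a], where p="[]" and q="[Pos (s A lt a,0)]"] by simp
    show ?thesis using G_trans[OF 1 2] .
  qed
  have r6: "group_equiv (Jset A) (relators A lt) [Pos (s A lt a,0), Neg (a,1)] [Pos (s A lt a,1), Pos (s A lt a,0)]"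
  proof -
    have 1: "group_equiv (Jset A) (relators A lt) [Pos (s A lt a,0), Neg (a,1)] [Pos (s A lt a,0), Neg (a,1), Neg (s A lt a,0), Pos (s A lt a,0)]"
      using ins_pair2[where j="(s A lt a,0)" and p="[Pos (s A lt a,0), Neg (a,1)]" and q="[]"] Jin b by simp
    have 2: "group_equiv (Jset A) (relators A lt) [Pos (s A lt a,0), Neg (a,1), Neg (s A lt a,0), Pos (s A lt a,0)] [Pos (s A lt a,1), Pos (s A lt a,0)]"
      using G_ctx[OF L6[OF a], where p="[]" and q="[Pos (s A lt a,0)]"] by simp
    show ?thesis using G_trans[OF 1 2] .
  qed
  have r7: "group_equiv (Jset A) (relators A lt) [Neg (s A lt a,0), Pos (s A lt a,1)] [Neg (a,1), Neg (s A lt a,0)]"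
  proof -
    have 1: "group_equiv (Jset A) (relators A lt) [Neg (s A lt a,0), Pos (s A lt a,1)] [Neg (s A lt a,0), Pos (s A lt a,0), Neg (a,1), Neg (s A lt a,0)]"
      using G_ctx[OF G_sym[OF L6[OF a]], where p="[Neg (s A lt a,0)]" and q="[]"] by simp
    have 2: "group_equiv (Jset A) (relators A lt) [Neg (a,1), Neg (s A lt a,0)] [Neg (s A lt a,0), Pos (s A lt a,0), Neg (a,1), Neg (s A lt a,0)]"
      using ins_pair2[where j="(s A lt a,0)" and p="[]" and q="[Neg (a,1), Neg (s A lt a,0)]"] Jin b by simp
    show ?thesis using G_trans[OF 1 G_sym[OF 2]] .
  qed
  have r8: "group_equiv (Jset A) (relators A lt) [Neg (s A lt a,0), Neg (s A lt a,1)] [Pos (a,1), Neg (s A lt a,0)]"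
  proof -
    have 1: "group_equiv (Jset A) (relators A lt) [Neg (s A lt a,0), Neg (s A lt a,1)] [Neg (s A lt a,0), Pos (s A lt a,0), Pos (a,1), Neg (s A lt a,0)]"
      using G_ctx[OF G_sym[OF L5[OF a]], where p="[Neg (s A lt a,0)]" and q="[]"] by simp
    have 2: "group_equiv (Jset A) (relators A lt) [Pos (a,1), Neg (s A lt a,0)] [Neg (s A lt a,0), Pos (s A lt a,0), Pos (a,1), Neg (s A lt a,0)]"
      using ins_pair2[where j="(s A lt a,0)" and p="[]" and q="[Pos (a,1), Neg (s A lt a,0)]"] Jin b by simp
    show ?thesis using G_trans[OF 1 G_sym[OF 2]] .
  qed
  show ?thesis using c p1[OF Jin(1)[OF a]] p2[OF Jin(1)[OF a]] p1[OF Jin(2)[OF a]] p2[OF Jin(2)[OF a]] r5 r6 r7 r8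
    by auto
qed

lemma requiv_eq: "requiv R = equivclp (rstep R)"
  unfolding requiv_def sym_cl_eq equivclp_def ..

lemma group_equiv_eq: "group_equiv J X = equivclp (gstep J X)"
  unfolding group_equiv_def sym_cl_eq equivclp_def ..

lemma requiv_G: "requiv (rules A lt) x y \<Longrightarrow> group_equiv (Jset A) (relators A lt) x y"
  unfolding requiv_eq group_equiv_eq
proof (rule equivclp_sub)
  fix x y assume "rstep (rules A lt) x y"
  then obtain p l r q where h: "(l,r) \<in> rules A lt" "x = p@l@q" "y = p@r@q" unfolding rstep_def by blast
  show "equivclp (gstep (Jset A) (relators A lt)) x y"
    using G_ctx[OF rule_G[OF h(1)]] h unfolding group_equiv_eq by simp
qed

lemma G_requiv: "group_equiv (Jset A) (relators A lt) x y \<Longrightarrow> requiv (rules A lt) x y"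
  unfolding requiv_eq group_equiv_eq
proof (rule equivclp_sub)
  fix x y assume "gstep (Jset A) (relators A lt) x y"
  then obtain u v r where h: "r \<in> relators A lt \<or> (\<exists>j\<in>Jset A. r = [Pos j, Neg j] \<or> r = [Neg j, Pos j])" "x = u@v" "y = u@r@v"
    unfolding gstep_def by blast
  have "(rstep (rules A lt))\<^sup>*\<^sup>* r []"
  proof -
    { assume "r \<in> relators A lt"
      then obtain a where a: "a \<in> Aset A" and r: "r = [Pos (s A lt a,0), Pos (a,1), Neg (s A lt a,0), Pos (s A lt a,1)]"
        unfolding relators_def by blast
      have b: "s A lt a \<in> Aset A" using s_in a by blast
      have m5: "([Pos (s A lt a,0), Pos (a,1)], [Neg (s A lt a,1), Pos (s A lt a,0)]) \<in> rules A lt"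
        using a unfolding rules_def by blast
      have m1: "([Pos (s A lt a,0), Neg (s A lt a,0)], []) \<in> rules A lt"
        using b unfolding rules_def by blast
      have m4: "([Neg (s A lt a,1), Pos (s A lt a,1)], []) \<in> rules A lt"
        using b unfolding rules_def by blast
      have 1: "rstep (rules A lt) r [Neg (s A lt a,1), Pos (s A lt a,0), Neg (s A lt a,0), Pos (s A lt a,1)]"
        using rstep_rule[OF m5, where p="[]" and q="[Neg (s A lt a,0), Pos (s A lt a,1)]"] r by simp
      have 2: "rstep (rules A lt) [Neg (s A lt a,1), Pos (s A lt a,0), Neg (s A lt a,0), Pos (s A lt a,1)] [Neg (s A lt a,1), Pos (s A lt a,1)]"
        using rstep_rule[OF m1, where p="[Neg (s A lt a,1)]" and q="[Pos (s A lt a,1)]"] by simp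
      have 3: "rstep (rules A lt) [Neg (s A lt a,1), Pos (s A lt a,1)] []"
        using rstep_rule[OF m4, where p="[]" and q="[]"] by simp
      have ?thesis using 1 2 3 by (meson converse_rtranclp_into_rtranclp rtranclp.rtrancl_refl) }
    moreover
    { assume "\<exists>j\<in>Jset A. r = [Pos j, Neg j] \<or> r = [Neg j, Pos j]"
      then obtain j where j: "j \<in> Jset A" and r: "r = [Pos j, Neg j] \<or> r = [Neg j, Pos j]" by blast
      obtain a i where ai: "j = (a,i)" "a \<in> Aset A" "i = 0 \<or> i = 1" using j unfolding Jset_def by blast
      have "(r, []) \<in> rules A lt" using ai r unfolding rules_def by blast
      hence ?thesis using rstep_rule[where p="[]" and q="[]"] by fastforce }
    ultimately show ?thesis using h(1) by blast
  qed
  hence "(rstep (rules A lt))\<^sup>*\<^sup>* y x" using rtc_ctx[where p=u and q=v] h by fastforce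
  thus "equivclp (rstep (rules A lt)) x y" by (rule converse_rtranclp_into_equivclp)
qed

lemma conf: "(rstep (rules A lt))\<^sup>*\<^sup>* x y \<Longrightarrow> (rstep (rules A lt))\<^sup>*\<^sup>* x z \<Longrightarrow> \<exists>u. (rstep (rules A lt))\<^sup>*\<^sup>* y u \<and> (rstep (rules A lt))\<^sup>*\<^sup>* z u"
  by (rule newman_gen[where m=mes, OF rstep_mes local_conf])

lemma term_rtc: "terminus R t \<Longrightarrow> (rstep R)\<^sup>*\<^sup>* t u \<Longrightarrow> t = u"
  unfolding terminus_def by (metis converse_rtranclpE)

lemma CR_unique: "terminus (rules A lt) t1 \<Longrightarrow> terminus (rules A lt) t2 \<Longrightarrow> requiv (rules A lt) t1 t2 \<Longrightarrow> t1 = t2"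
proof -
  assume t: "terminus (rules A lt) t1" "terminus (rules A lt) t2" "requiv (rules A lt) t1 t2"
  have "semiconfluentp (rstep (rules A lt))"
    by (rule confluentp_imp_semiconfluentp, rule confluentpI, rule conf)
  hence "((rstep (rules A lt))\<^sup>*\<^sup>* OO (rstep (rules A lt))\<inverse>\<inverse>\<^sup>*\<^sup>*) t1 t2"
    using t(3) semiconfluentp_equivclp requiv_eq by metis
  then obtain u where "(rstep (rules A lt))\<^sup>*\<^sup>* t1 u" "(rstep (rules A lt))\<^sup>*\<^sup>* t2 u"
    unfolding rtranclp_conversep by auto
  thus ?thesis using term_rtc t by metis
qed

end
theorem mainTheorem8:
  fixes A :: "nat \<Rightarrow> 'a set" and lt :: "nat \<Rightarrow> 'a \<Rightarrow> 'a \<Rightarrow> bool"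
  assumes iso: "\<And>n. \<exists>f :: int \<Rightarrow> 'a. bij_betw f UNIV (A n) \<and>
                    (\<forall>x y. lt n (f x) (f y) \<longleftrightarrow> x < y)"
  defines "W \<equiv> words (Jset A)"
  shows "terminating_on W (rules A lt)
    \<and> locally_confluent_on W (rules A lt)
    \<and> confluent_on W (rules A lt)
    \<and> (\<forall>w\<in>W. \<exists>!t. t \<in> W \<and> terminus (rules A lt) t \<and> requiv (rules A lt) w t)
    \<and> (\<forall>t\<in>W. terminus (rules A lt) t \<longrightarrow> freely_reduced t)
    \<and> (\<forall>w\<in>W. \<exists>!t. t \<in> W \<and> terminus (rules A lt) t
                  \<and> group_equiv (Jset A) (relators A lt) w t)"
proof -
  have requiv_eq: "\<And>R. requiv R = equivclp (rstep R)"
    unfolding requiv_def sym_cl_eq equivclp_def ..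
  have T: "terminating_on W (rules A lt)" unfolding terminating_on_def using no_inf_chain[of A lt] by blast
  have LC: "locally_confluent_on W (rules A lt)" unfolding locally_confluent_on_def
  proof (intro ballI allI impI)
    fix w0 w1 w2 assume "rstep (rules A lt) w0 w1 \<and> rstep (rules A lt) w0 w2"
    thus "\<exists>w3. (rstep (rules A lt))\<^sup>*\<^sup>* w1 w3 \<and> (rstep (rules A lt))\<^sup>*\<^sup>* w2 w3"
      using local_conf[where A=A and lt=lt, OF iso] by blast
  qed
  have C: "confluent_on W (rules A lt)" unfolding confluent_on_def
  proof (intro ballI allI impI)
    fix w0 w1 w2 assume "(rstep (rules A lt))\<^sup>*\<^sup>* w0 w1 \<and> (rstep (rules A lt))\<^sup>*\<^sup>* w0 w2"
    thus "\<exists>w3. (rstep (rules A lt))\<^sup>*\<^sup>* w1 w3 \<and> (rstep (rules A lt))\<^sup>*\<^sup>* w2 w3"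
      using conf[where A=A and lt=lt, OF iso] by blast
  qed
  have U: "\<forall>w\<in>W. \<exists>!t. t \<in> W \<and> terminus (rules A lt) t \<and> requiv (rules A lt) w t"
  proof
    fix w assume w: "w \<in> W"
    obtain t where t: "(rstep (rules A lt))\<^sup>*\<^sup>* w t" "\<not> (\<exists>t'. rstep (rules A lt) t t')"
      using nf_exists_gen[where m=mes, OF rstep_mes[of A lt]] by blast
    have tW: "t \<in> W" using rtc_words[where A=A and lt=lt, OF iso t(1)] w W_def by simp
    have tt: "terminus (rules A lt) t" using t(2) by (simp add: terminus_def)
    have wt: "requiv (rules A lt) w t" using rtranclp_into_equivclp[OF t(1)] by (simp add: requiv_eq)
    have uq: "\<forall>t'. t' \<in> W \<and> terminus (rules A lt) t' \<and> requiv (rules A lt) w t' \<longrightarrow> t' = t"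
    proof (intro allI impI)
      fix t' assume h: "t' \<in> W \<and> terminus (rules A lt) t' \<and> requiv (rules A lt) w t'"
      have "requiv (rules A lt) t' t" using h wt unfolding requiv_eq by (meson equivclp_sym equivclp_trans)
      thus "t' = t" using CR_unique[where A=A and lt=lt, OF iso] h tt by blast
    qed
    show "\<exists>!t. t \<in> W \<and> terminus (rules A lt) t \<and> requiv (rules A lt) w t"
    proof (rule ex1I[of _ t])
      show "t \<in> W \<and> terminus (rules A lt) t \<and> requiv (rules A lt) w t" using tW tt wt by blast
    next
      fix y assume "y \<in> W \<and> terminus (rules A lt) y \<and> requiv (rules A lt) w y"
      thus "y = t" using uq by blast
    qed
  qed
  have FR: "\<forall>t\<in>W. terminus (rules A lt) t \<longrightarrow> freely_reduced t"
  proof (intro ballI impI)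
    fix t assume tW: "t \<in> W" and tt: "terminus (rules A lt) t"
    show "freely_reduced t" unfolding freely_reduced_def
    proof
      assume "\<exists>u v j. t = u @ [Pos j, Neg j] @ v \<or> t = u @ [Neg j, Pos j] @ v"
      then obtain u v j where d: "t = u @ [Pos j, Neg j] @ v \<or> t = u @ [Neg j, Pos j] @ v" by blast
      have "Pos j \<in> set t" using d by auto
      hence "Pos j \<in> alphabet (Jset A)" using tW unfolding W_def words_def by blast
      hence "j \<in> Jset A" unfolding alphabet_def by auto
      then obtain a i where ai: "j = (a,i)" "a \<in> Aset A" "i = 0 \<or> i = 1" unfolding Jset_def by blast
      have m: "([Pos j, Neg j], []) \<in> rules A lt" "([Neg j, Pos j], []) \<in> rules A lt"
        using ai unfolding rules_def by blast+
      have "rstep (rules A lt) t (u@v)" using d rstep_rule[OF m(1), of u v] rstep_rule[OF m(2), of u v] by auto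
      thus False using tt unfolding terminus_def by blast
    qed
  qed
  have eq: "\<And>w t. group_equiv (Jset A) (relators A lt) w t = requiv (rules A lt) w t"
    using requiv_G[where A=A and lt=lt, OF iso] G_requiv[where A=A and lt=lt, OF iso] by blast
  have GU: "\<forall>w\<in>W. \<exists>!t. t \<in> W \<and> terminus (rules A lt) t
                  \<and> group_equiv (Jset A) (relators A lt) w t" using U by (simp only: eq)
  from T LC C U FR GU show ?thesis by (intro conjI)
qed

end
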